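(* Consider the nonlinear program described in the context. Let $x\in\mathcal{C}$ and suppose MFCQ holds at $x$. Then (i) $\mathcal{G}_\alpha(x)\in T_{\mathcal{C}}(x)$ for every $\alpha>0$; and (ii) $\lim_{\alpha\to\infty}\mathcal{G}_\alpha(x)=\Pi_{T_{\mathcal{C}}(x)}(-\nabla f(x))$.
   Context: Let $f:\mathbb{R}^n\to\mathbb{R}$, $g:\mathbb{R}^n\to\mathbb{R}^m$, $h:\mathbb{R}^n\to\mathbb{R}^k$ be continuously differentiable; consider minimize $f(x)$ subject to $g(x)\le0$, $h(x)=0$ with feasible set $\mathcal{C}=\{x:g(x)\le0,h(x)=0\}$; $I_0(x)=\{i:g_i(x)=0\}$. MFCQ at $x$: $\{\nabla h_j(x)\}_{j=1}^k$ linearly independent and some $\xi$ has $\nabla h_j(x)^\top\xi=0$ for all $j$ and $\nabla g_i(x)^\top\xi<0$ for $i\in I_0(x)$. For $\alpha>0$, $\mathcal{G}_\alpha(x)$ is the unique minimizer over $\xi\in\mathbb{R}^n$ of $\frac12\|\xi+\nabla f(x)\|^2$ subject to $\frac{\partial g}{\partial x}(x)\xi\le-\alpha g(x)$, $\frac{\partial h}{\partial x}(x)\xi=-\alpha h(x)$. $T_{\mathcal{C}}(x)$ is the tangent cone: $d\in T_{\mathcal{C}}(x)$ iff there exist $t^\nu\to0^+$, $x^\nu\in\mathcal{C}$, $x^\nu\to x$ with $(x^\nu-x)/t^\nu\to d$ (under MFCQ at $x\in\mathcal{C}$ this equals $\{\xi:\frac{\partial h}{\partial x}(x)\xi=0,\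 \nabla g_i(x)^\top\xi\le0\ \forall i\in I_0(x)\}$, a closed convex cone). $\Pi_{T_{\mathcal{C}}(x)}$ is the Euclidean projection onto $T_{\mathcal{C}}(x)$. *)

theory Defs
  imports "HOL-Analysis.Analysis"
begin

definition grad :: "('a::euclidean_space \<Rightarrow> real) \<Rightarrow> 'a \<Rightarrow> 'a" where
  "grad f x = (\<Sum>b\<in>Basis. frechet_derivative f (at x) b *\<^sub>R b)"

definition C1_fun :: "('a::euclidean_space \<Rightarrow> real) \<Rightarrow> bool" where
  "C1_fun f \<longleftrightarrow> (\<forall>x. f differentiable (at x)) \<and> continuous_on UNIV (grad f)"

definition feasible_set ::
  "nat \<Rightarrow> (nat \<Rightarrow> 'a::euclidean_space \<Rightarrow> real) \<Rightarrow> nat \<Rightarrow> (nat \<Rightarrow> 'a \<Rightarrow> real) \<Rightarrow> 'a set" where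
  "feasible_set m g k h = {x. (\<forall>i<m. g i x \<le> 0) \<and> (\<forall>j<k. h j x = 0)}"

definition active_set :: "nat \<Rightarrow> (nat \<Rightarrow> 'a \<Rightarrow> real) \<Rightarrow> 'a \<Rightarrow> nat set" where
  "active_set m g x = {i. i < m \<and> g i x = 0}"

definition MFCQ ::
  "nat \<Rightarrow> (nat \<Rightarrow> 'a::euclidean_space \<Rightarrow> real) \<Rightarrow> nat \<Rightarrow> (nat \<Rightarrow> 'a \<Rightarrow> real) \<Rightarrow> 'a \<Rightarrow> bool" where
  "MFCQ m g k h x \<longleftrightarrow>
     inj_on (\<lambda>j. grad (h j) x) {..<k} \<and> independent ((\<lambda>j. grad (h j) x) ` {..<k}) \<and>
     (\<exists>\<xi>. (\<forall>j<k. grad (h j) x \<bullet> \<xi> = 0) \<and> (\<forall>i\<in>active_set m g x. grad (g i) x \<bullet> \<xi> < 0))"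

definition qp_feasible ::
  "nat \<Rightarrow> (nat \<Rightarrow> 'a::euclidean_space \<Rightarrow> real) \<Rightarrow> nat \<Rightarrow> (nat \<Rightarrow> 'a \<Rightarrow> real) \<Rightarrow> real \<Rightarrow> 'a \<Rightarrow> 'a set" where
  "qp_feasible m g k h \<alpha> x =
     {\<xi>. (\<forall>i<m. grad (g i) x \<bullet> \<xi> \<le> - \<alpha> * g i x) \<and> (\<forall>j<k. grad (h j) x \<bullet> \<xi> = - \<alpha> * h j x)}"

definition G_alpha ::
  "('a::euclidean_space \<Rightarrow> real) \<Rightarrow> nat \<Rightarrow> (nat \<Rightarrow> 'a \<Rightarrow> real) \<Rightarrow> nat \<Rightarrow> (nat \<Rightarrow> 'a \<Rightarrow> real) \<Rightarrow> real \<Rightarrow> 'a \<Rightarrow> 'a" where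
  "G_alpha f m g k h \<alpha> x =
     (THE \<xi>. \<xi> \<in> qp_feasible m g k h \<alpha> x \<and>
        (\<forall>\<eta>\<in>qp_feasible m g k h \<alpha> x.
           (1/2) * (norm (\<xi> + grad f x))\<^sup>2 \<le> (1/2) * (norm (\<eta> + grad f x))\<^sup>2))"

definition tangent_cone :: "'a::real_normed_vector set \<Rightarrow> 'a \<Rightarrow> 'a set" where
  "tangent_cone C x = {d. \<exists>t xs. (\<forall>\<nu>. t \<nu> > (0::real)) \<and> t \<longlonglongrightarrow> 0 \<and>
       (\<forall>\<nu>. xs \<nu> \<in> C) \<and> xs \<longlonglongrightarrow> x \<and> (\<lambda>\<nu>. (1 / t \<nu>) *\<^sub>R (xs \<nu> - x)) \<longlonglongrightarrow> d}"

end

theory Submission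
  imports Defs
begin
lemma grad_deriv:
  fixes f :: "'a::euclidean_space \<Rightarrow> real"
  assumes "f differentiable (at x)"
  shows "(f has_derivative (\<lambda>v. grad f x \<bullet> v)) (at x)"
proof -
  let ?D = "frechet_derivative f (at x)"
  have d: "(f has_derivative ?D) (at x)" using assms frechet_derivative_works by blast
  then have lin: "linear ?D" using has_derivative_linear by blast
  have "?D v = grad f x \<bullet> v" for v
  proof -
    have "?D v = ?D (\<Sum>b\<in>Basis. (v \<bullet> b) *\<^sub>R b)" by (simp add: euclidean_representation)
    also have "\<dots> = (\<Sum>b\<in>Basis. (v \<bullet> b) * ?D b)"
      using lin by (simp add: linear_sum linear_scale)
    also have "\<dots> = grad f x \<bullet> v"
      unfolding grad_def by (simp add: inner_sum_right mult.commute inner_commute)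
    finally show ?thesis .
  qed
  then have "?D = (\<lambda>v. grad f x \<bullet> v)" by auto
  with d show ?thesis by simp
qed

lemma tc_char:
  fixes C :: "'a::real_normed_vector set"
  shows "d \<in> tangent_cone C x \<longleftrightarrow>
    (\<forall>e>0. \<exists>t y. 0 < t \<and> t < e \<and> y \<in> C \<and> norm (y - x) < e \<and> norm ((1/t) *\<^sub>R (y - x) - d) < e)"
proof
  assume "d \<in> tangent_cone C x"
  then obtain t xs where tp: "\<forall>\<nu>. t \<nu> > (0::real)" and t0: "t \<longlonglongrightarrow> 0"
    and xC: "\<forall>\<nu>. xs \<nu> \<in> C" and xx: "xs \<longlonglongrightarrow> x" and dd: "(\<lambda>\<nu>. (1 / t \<nu>) *\<^sub>R (xs \<nu> - x)) \<longlonglongrightarrow> d"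
    unfolding tangent_cone_def by blast
  show "\<forall>e>0. \<exists>t y. 0 < t \<and> t < e \<and> y \<in> C \<and> norm (y - x) < e \<and> norm ((1/t) *\<^sub>R (y - x) - d) < e"
  proof (intro allI impI)
    fix e :: real assume e: "e > 0"
    have "eventually (\<lambda>n. dist (t n) 0 < e) sequentially" using tendstoD[OF t0 e] .
    moreover have "eventually (\<lambda>n. dist (xs n) x < e) sequentially" using tendstoD[OF xx e] .
    moreover have "eventually (\<lambda>n. dist ((1 / t n) *\<^sub>R (xs n - x)) d < e) sequentially" using tendstoD[OF dd e] .
    ultimately have "eventually (\<lambda>n. dist (t n) 0 < e \<and> dist (xs n) x < e \<and> dist ((1 / t n) *\<^sub>R (xs n - x)) d < e) sequentially"
      by eventually_elim auto
    then obtain N where "\<forall>n\<ge>N. dist (t n) 0 < e \<and> dist (xs n) x < e \<and> dist ((1 / t n) *\<^sub>R (xs n - x)) d < e"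
      unfolding eventually_sequentially by blast
    then have "dist (t N) 0 < e \<and> dist (xs N) x < e \<and> dist ((1 / t N) *\<^sub>R (xs N - x)) d < e" by blast
    then show "\<exists>t y. 0 < t \<and> t < e \<and> y \<in> C \<and> norm (y - x) < e \<and> norm ((1/t) *\<^sub>R (y - x) - d) < e"
      using tp xC by (intro exI[of _ "t N"] exI[of _ "xs N"]) (auto simp: dist_norm)
  qed
next
  assume H: "\<forall>e>0. \<exists>t y. 0 < t \<and> t < e \<and> y \<in> C \<and> norm (y - x) < e \<and> norm ((1/t) *\<^sub>R (y - x) - d) < e"
  have "\<forall>n. \<exists>t y. 0 < t \<and> t < 1 / real (Suc n) \<and> y \<in> C \<and> norm (y - x) < 1 / real (Suc n) \<and> norm ((1/t) *\<^sub>R (y - x) - d) < 1 / real (Suc n)"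
    using H by simp
  then obtain T Y where TY: "\<And>n. 0 < T n \<and> T n < 1 / real (Suc n) \<and> Y n \<in> C \<and> norm (Y n - x) < 1 / real (Suc n) \<and> norm ((1/T n) *\<^sub>R (Y n - x) - d) < 1 / real (Suc n)"
    by (metis (no_types))
  have "T \<longlonglongrightarrow> 0"
  proof (rule LIMSEQ_norm_0)
    fix n show "norm (T n) < 1 / real (Suc n)" using TY[of n] by simp
  qed
  moreover have "Y \<longlonglongrightarrow> x"
  proof (rule LIM_zero_cancel, rule LIMSEQ_norm_0)
    fix n show "norm (Y n - x) < 1 / real (Suc n)" using TY[of n] by blast
  qed
  moreover have "(\<lambda>n. (1/T n) *\<^sub>R (Y n - x)) \<longlonglongrightarrow> d"
  proof (rule LIM_zero_cancel, rule LIMSEQ_norm_0)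
    fix n show "norm ((1/T n) *\<^sub>R (Y n - x) - d) < 1 / real (Suc n)" using TY[of n] by blast
  qed
  ultimately show "d \<in> tangent_cone C x" unfolding tangent_cone_def using TY by blast
qed
lemma tc_necessary:
  fixes \<phi> :: "'a::euclidean_space \<Rightarrow> real"
  assumes der: "(\<phi> has_derivative (\<lambda>v. a \<bullet> v)) (at x)" and le: "\<forall>y\<in>C. \<phi> y \<le> \<phi> x"
    and d: "d \<in> tangent_cone C x"
  shows "a \<bullet> d \<le> 0"
proof (rule ccontr)
  assume "\<not> a \<bullet> d \<le> 0"
  then have c: "a \<bullet> d > 0" by simp
  define c where "c = a \<bullet> d"
  define \<eta> where "\<eta> = c / (4 * (norm d + 1))"
  have nd: "(4::real) * (norm d + 1) > 0" by (smt (verit) norm_ge_zero)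
  have na: "(4::real) * (norm a + 1) > 0" by (smt (verit) norm_ge_zero)
  have \<eta>: "\<eta> > 0" using nd unfolding \<eta>_def c_def using c norm_ge_zero[of d] by (intro divide_pos_pos) linarith+
  obtain r where r: "r > 0" and rr: "\<And>y. norm (y - x) < r \<Longrightarrow> norm (\<phi> y - \<phi> x - a \<bullet> (y - x)) \<le> \<eta> * norm (y - x)"
    using der \<eta> unfolding has_derivative_at_alt by blast
  define e where "e = min r (min 1 (c / (4 * (norm a + 1))))"
  have "c / (4 * (norm a + 1)) > 0" using na unfolding c_def using c norm_ge_zero[of a] by (intro divide_pos_pos) linarith+
  then have e: "e > 0" using r by (simp add: e_def)
  obtain t y where t: "0 < t" and yC: "y \<in> C" and yx: "norm (y - x) < e" and ud: "norm ((1/t) *\<^sub>R (y - x) - d) < e"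
    using d e unfolding tc_char by blast
  define u where "u = (1/t) *\<^sub>R (y - x)"
  have yxu: "y - x = t *\<^sub>R u" using t by (simp add: u_def)
  have ud': "norm (u - d) < e" using ud u_def by simp
  have "\<bar>a \<bullet> (u - d)\<bar> \<le> norm a * norm (u - d)" by (rule Cauchy_Schwarz_ineq2)
  also have "\<dots> \<le> norm a * e" using ud' by (simp add: mult_left_mono)
  also have "\<dots> \<le> norm a * (c / (4 * (norm a + 1)))"
    by (rule mult_left_mono) (auto simp: e_def)
  also have "\<dots> \<le> c / 4"
  proof -
    have "norm a / (norm a + 1) \<le> 1" using na by (simp add: divide_le_eq_1)
    then have "norm a * c / (4 * (norm a + 1)) \<le> c / 4" using c
      by (simp add: c_def field_simps add_pos_nonneg)
    then show ?thesis by simp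
  qed
  finally have X: "\<bar>a \<bullet> u - a \<bullet> d\<bar> \<le> c/4" by (simp add: inner_diff_right)
  then have au: "a \<bullet> u \<ge> c - c/4" unfolding c_def by (smt (verit))
  have nu: "norm u \<le> norm d + 1"
  proof -
    have "norm u \<le> norm d + norm (u - d)" by (metis norm_triangle_sub add.commute)
    moreover have "e \<le> 1" by (simp add: e_def)
    ultimately show ?thesis using ud' by linarith
  qed
  have "norm (y - x) < r" using yx by (simp add: e_def)
  then have "norm (\<phi> y - \<phi> x - a \<bullet> (y - x)) \<le> \<eta> * norm (y - x)" by (rule rr)
  then have H1: "\<phi> y - \<phi> x \<ge> a \<bullet> (y - x) - \<eta> * norm (y - x)" by (smt (verit) norm_minus_commute real_norm_def)
  have H2: "a \<bullet> (y - x) - \<eta> * norm (y - x) = t * (a \<bullet> u - \<eta> * norm u)"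
    using t by (simp add: yxu algebra_simps)
  have H3: "t * (a \<bullet> u - \<eta> * norm u) > 0"
  proof -
    have "\<eta> * norm u \<le> \<eta> * (norm d + 1)" using nu \<eta> by (simp add: mult_left_mono)
    also have "\<dots> = c / 4" using nd unfolding \<eta>_def by (simp add: field_simps)
    finally have "a \<bullet> u - \<eta> * norm u > 0" using au c c_def by linarith
    then show ?thesis using t by simp
  qed
  have "\<phi> y \<le> \<phi> x" using le yC by blast
  then show False using H1 H2 H3 by linarith
qed
lemma indep_coeffs:
  fixes a :: "nat \<Rightarrow> 'a::euclidean_space"
  assumes inj: "inj_on a {..<k}" and ind: "independent (a ` {..<k})"
    and s: "(\<Sum>j<k. c j *\<^sub>R a j) = 0" and j: "j < k"
  shows "c j = 0"
proof -
  define c' where "c' w = c (inv_into {..<k} a w)" for w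
  have "(\<Sum>w\<in>a ` {..<k}. c' w *\<^sub>R w) = (\<Sum>j<k. c' (a j) *\<^sub>R a j)"
    by (rule sum.reindex[OF inj, unfolded comp_def])
  also have "\<dots> = (\<Sum>j<k. c j *\<^sub>R a j)"
    by (rule sum.cong) (auto simp: c'_def inv_into_f_f[OF inj])
  finally have "(\<Sum>w\<in>a ` {..<k}. c' w *\<^sub>R w) = 0" using s by simp
  then have "\<forall>w\<in>a ` {..<k}. c' w = 0" using ind unfolding independent_explicit by blast
  then have "c' (a j) = 0" using j by blast
  then show ?thesis using j by (simp add: c'_def inv_into_f_f[OF inj])
qed

lemma span_orth_zero:
  fixes a :: "nat \<Rightarrow> 'a::euclidean_space"
  assumes "\<forall>j<k. a j \<bullet> u = 0" and "u = (\<Sum>j<k. c j *\<^sub>R a j)"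
  shows "u = 0"
proof -
  have "u \<bullet> u = (\<Sum>j<k. c j * (a j \<bullet> u))" using assms(2)
    by (metis (no_types, lifting) inner_scaleR_left inner_sum_left sum.cong)
  also have "\<dots> = 0" using assms(1) by simp
  finally show ?thesis by simp
qed

lemma proj_exists:
  fixes a :: "nat \<Rightarrow> 'a::euclidean_space"
  obtains Pr :: "'a \<Rightarrow> 'a" where "linear Pr" "\<And>v j. j < k \<Longrightarrow> a j \<bullet> Pr v = 0"
    "\<And>v. (\<forall>j<k. a j \<bullet> v = 0) \<Longrightarrow> Pr v = 0 \<Longrightarrow> v = 0"
proof -
  define N where "N = {v. \<forall>j<k. a j \<bullet> v = 0}"
  obtain B where B: "B \<subseteq> N" "independent B" "N \<subseteq> span B"
    by (rule basis_exists)
  have fB: "finite B" using independent_bound[OF B(2)] by (rule conjunct1)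
  define Pr where "Pr v = (\<Sum>b\<in>B. (v \<bullet> b) *\<^sub>R b)" for v
  have L: "linear Pr"
  proof (rule linearI)
    fix u v show "Pr (u + v) = Pr u + Pr v"
      unfolding Pr_def by (simp add: inner_add_left scaleR_add_left sum.distrib)
  next
    fix c u show "Pr (c *\<^sub>R u) = c *\<^sub>R Pr u"
      unfolding Pr_def by (simp add: scaleR_sum_right)
  qed
  have P: "a j \<bullet> Pr v = 0" if "j < k" for v j
  proof -
    have "a j \<bullet> Pr v = (\<Sum>b\<in>B. (v \<bullet> b) * (a j \<bullet> b))" unfolding Pr_def by (simp add: inner_sum_right)
    also have "\<dots> = 0"
    proof (rule sum.neutral, rule ballI)
      fix b assume "b \<in> B"
      then have "a j \<bullet> b = 0" using B(1) that unfolding N_def by blast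
      then show "(v \<bullet> b) * (a j \<bullet> b) = 0" by simp
    qed
    finally show ?thesis .
  qed
  have Q: "v = 0" if v: "\<forall>j<k. a j \<bullet> v = 0" and p: "Pr v = 0" for v
  proof -
    have "v \<bullet> Pr v = (\<Sum>b\<in>B. (v \<bullet> b)\<^sup>2)" unfolding Pr_def by (simp add: inner_sum_right power2_eq_square)
    then have "(\<Sum>b\<in>B. (v \<bullet> b)\<^sup>2) = 0" using p by simp
    then have z: "\<forall>b\<in>B. v \<bullet> b = 0" using fB by (simp add: sum_nonneg_eq_0_iff)
    have "v \<in> span B" using v B(3) by (auto simp: N_def)
    moreover have "\<And>y. y \<in> B \<Longrightarrow> orthogonal v y" using z unfolding orthogonal_def by blast
    ultimately have "orthogonal v v" by (rule orthogonal_to_span)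
    then show "v = 0" by (simp add: orthogonal_def)
  qed
  show ?thesis by (rule that[OF L P Q])
qed

lemma eq_curve:
  fixes h :: "nat \<Rightarrow> 'a::euclidean_space \<Rightarrow> real" and a :: "nat \<Rightarrow> 'a"
  assumes der: "\<And>j. j < k \<Longrightarrow> (h j has_derivative (\<lambda>v. a j \<bullet> v)) (at x)"
    and cont: "\<And>j. j < k \<Longrightarrow> continuous_on UNIV (h j)"
    and hx: "\<And>j. j < k \<Longrightarrow> h j x = 0"
    and inj: "inj_on a {..<k}" and ind: "independent (a ` {..<k})"
    and dN: "\<And>j. j < k \<Longrightarrow> a j \<bullet> d = 0"
    and \<eta>: "\<eta> > 0"
  shows "\<exists>\<delta>>0. \<forall>t. 0 < t \<and> t < \<delta> \<longrightarrow> (\<exists>y. (\<forall>j<k. h j y = 0) \<and> norm (y - x - t *\<^sub>R d) \<le> \<eta> * t)"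
proof -
  obtain Pr :: "'a \<Rightarrow> 'a" where Pl: "linear Pr" and Pa: "\<And>v j. j < k \<Longrightarrow> a j \<bullet> Pr v = 0"
    and Pi: "\<And>v. (\<forall>j<k. a j \<bullet> v = 0) \<Longrightarrow> Pr v = 0 \<Longrightarrow> v = 0"
    using proj_exists[of k a] by blast
  have Pb: "bounded_linear Pr" using Pl linear_conv_bounded_linear by blast
  define H where "H y = (\<Sum>j<k. h j y *\<^sub>R a j)" for y
  define \<Psi> where "\<Psi> y = H y + Pr y" for y
  define \<Psi>' where "\<Psi>' v = (\<Sum>j<k. (a j \<bullet> v) *\<^sub>R a j) + Pr v" for v
  have dH: "((\<lambda>y. \<Sum>j<k. h j y *\<^sub>R a j) has_derivative (\<lambda>v. \<Sum>j<k. (a j \<bullet> v) *\<^sub>R a j)) (at x)"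
  proof (rule has_derivative_sum)
    fix j assume "j \<in> {..<k}"
    then have "j < k" by simp
    show "((\<lambda>y. h j y *\<^sub>R a j) has_derivative (\<lambda>v. (a j \<bullet> v) *\<^sub>R a j)) (at x)"
      by (rule has_derivative_scaleR_left[OF der[OF \<open>j < k\<close>]])
  qed
  have d\<Psi>: "(\<Psi> has_derivative \<Psi>') (at x)"
    unfolding \<Psi>_def \<Psi>'_def H_def
    by (rule has_derivative_add[OF dH bounded_linear_imp_has_derivative[OF Pb]])
  have cH: "continuous_on UNIV (\<lambda>y. \<Sum>j<k. h j y *\<^sub>R a j)"
  proof (rule continuous_on_sum)
    fix j assume "j \<in> {..<k}"
    then have "j < k" by simp
    show "continuous_on UNIV (\<lambda>y. h j y *\<^sub>R a j)"
      by (rule continuous_on_scaleR[OF cont[OF \<open>j < k\<close>] continuous_on_const])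
  qed
  have c\<Psi>: "continuous_on UNIV \<Psi>"
    unfolding \<Psi>_def H_def by (rule continuous_on_add[OF cH linear_continuous_on[OF Pb]])
  have \<Psi>'l: "linear \<Psi>'" by (rule has_derivative_linear[OF d\<Psi>])
  have \<Psi>'inj: "inj \<Psi>'"
    unfolding linear_injective_0[OF \<Psi>'l]
  proof (intro allI impI)
    fix v assume v0: "\<Psi>' v = 0"
    have u: "Pr v = (\<Sum>j<k. (- (a j \<bullet> v)) *\<^sub>R a j)"
      using v0 unfolding \<Psi>'_def by (simp add: sum_negf eq_neg_iff_add_eq_0 add.commute)
    have "Pr v = 0" by (rule span_orth_zero[OF _ u]) (use Pa in blast)
    then have "(\<Sum>j<k. (a j \<bullet> v) *\<^sub>R a j) = 0" using v0 unfolding \<Psi>'_def by simp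
    then have "\<forall>j<k. a j \<bullet> v = 0" using indep_coeffs[OF inj ind, of "\<lambda>j. a j \<bullet> v"] by blast
    then show "v = 0" using Pi \<open>Pr v = 0\<close> by blast
  qed
  have sj: "surj \<Psi>'" by (rule linear_injective_imp_surjective[OF \<Psi>'l \<Psi>'inj refl])
  obtain G where Gl: "linear G" and GR: "\<Psi>' \<circ> G = id"
    using linear_surjective_right_inverse[OF \<Psi>'l sj] by blast
  have GL: "G \<circ> \<Psi>' = id" using linear_inverse_left[OF \<Psi>'l Gl] GR by simp
  have Gb: "bounded_linear G" using Gl linear_conv_bounded_linear by blast
  obtain K where K: "K > 0" and KG: "\<And>v. norm (G v) \<le> norm v * K"
    using bounded_linear.pos_bounded[OF Gb] by blast
  have nd: "norm d + 1 > 0" by (smt (verit) norm_ge_zero)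
  define m where "m = min (1/2) (\<eta> / (2 * (norm d + 1)))"
  have m: "m > 0" using \<eta> nd by (simp add: m_def)
  define \<eta>1 where "\<eta>1 = m / K"
  have \<eta>1: "\<eta>1 > 0" using m K by (simp add: \<eta>1_def)
  have K\<eta>1: "K * \<eta>1 = m" using K by (simp add: \<eta>1_def)
  obtain r where r: "r > 0" and rr: "\<And>y. norm (y - x) < r \<Longrightarrow> norm (\<Psi> y - \<Psi> x - \<Psi>' (y - x)) \<le> \<eta>1 * norm (y - x)"
    using d\<Psi> \<eta>1 unfolding has_derivative_at_alt by blast
  have "\<Psi> x \<in> interior (\<Psi> ` ball x r)"
    by (rule sussmann_open_mapping[OF open_UNIV c\<Psi> UNIV_I d\<Psi> Gb GR subset_UNIV]) (simp add: r)
  then obtain \<rho> where \<rho>: "\<rho> > 0" and \<rho>b: "ball (\<Psi> x) \<rho> \<subseteq> \<Psi> ` ball x r"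
    unfolding mem_interior by blast
  define \<delta> where "\<delta> = \<rho> / (norm (\<Psi>' d) + 1)"
  have n\<Psi>d: "norm (\<Psi>' d) + 1 > 0" by (smt (verit) norm_ge_zero)
  have \<delta>: "\<delta> > 0" using \<rho> n\<Psi>d by (simp add: \<delta>_def)
  show ?thesis
  proof (intro exI[of _ \<delta>] conjI allI impI)
    show "\<delta> > 0" by (rule \<delta>)
    fix t assume t: "0 < t \<and> t < \<delta>"
    have "norm (t *\<^sub>R \<Psi>' d) = t * norm (\<Psi>' d)" using t by simp
    also have "\<dots> < \<delta> * (norm (\<Psi>' d) + 1)" using t by (smt (verit) mult_left_mono norm_ge_zero mult_strict_right_mono n\<Psi>d)
    also have "\<dots> = \<rho>" using n\<Psi>d by (simp add: \<delta>_def)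
    finally have "\<Psi> x + t *\<^sub>R \<Psi>' d \<in> ball (\<Psi> x) \<rho>" by (simp add: dist_norm)
    then have "\<Psi> x + t *\<^sub>R \<Psi>' d \<in> \<Psi> ` ball x r" using \<rho>b by blast
    then have "\<exists>y\<in>ball x r. \<Psi> x + t *\<^sub>R \<Psi>' d = \<Psi> y" by (simp only: image_iff)
    then obtain y where yb: "y \<in> ball x r" and y\<Psi>: "\<Psi> y = \<Psi> x + t *\<^sub>R \<Psi>' d"
      by (metis)
    have yr: "norm (y - x) < r" using yb by (simp add: dist_norm norm_minus_commute)
    define err where "err = \<Psi> y - \<Psi> x - \<Psi>' (y - x)"
    have errb: "norm err \<le> \<eta>1 * norm (y - x)" using rr[OF yr] by (simp add: err_def)
    have lin: "\<Psi>' (y - x) = t *\<^sub>R \<Psi>' d - err" using y\<Psi> by (simp add: err_def)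
    have "y - x = G (\<Psi>' (y - x))" using GL by (metis comp_apply id_apply)
    also have "\<dots> = t *\<^sub>R d - G err"
      using GL by (simp add: lin linear_diff[OF Gl] linear_scale[OF Gl] pointfree_idE)
    finally have yx: "y - x - t *\<^sub>R d = - G err" by simp
    have nGe: "norm (G err) \<le> m * norm (y - x)"
    proof -
      have "norm (G err) \<le> norm err * K" by (rule KG)
      also have "\<dots> \<le> \<eta>1 * norm (y - x) * K" using errb K by (simp add: mult_right_mono)
      also have "\<dots> = m * norm (y - x)" using K\<eta>1 by (simp add: algebra_simps)
      finally show ?thesis .
    qed
    have m2: "m \<le> 1/2" "m \<le> \<eta> / (2 * (norm d + 1))" unfolding m_def by (rule min.cobounded1, rule min.cobounded2)
    have "norm (y - x) \<le> norm (t *\<^sub>R d) + norm (G err)"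
      using yx by (metis add_diff_cancel_left' diff_add_cancel norm_minus_cancel norm_triangle_ineq)
    also have "\<dots> \<le> t * norm d + m * norm (y - x)" using nGe t by simp
    also have "\<dots> \<le> t * norm d + (1/2) * norm (y - x)" using mult_right_mono[OF m2(1) norm_ge_zero[of "y - x"]] by simp
    finally have ny: "norm (y - x) \<le> 2 * t * norm d" by simp
    have "norm (y - x - t *\<^sub>R d) = norm (G err)" using yx by simp
    also have "\<dots> \<le> m * norm (y - x)" by (rule nGe)
    also have "\<dots> \<le> (\<eta> / (2 * (norm d + 1))) * (2 * t * norm d)"
      using m2 m ny by (meson mult_mono norm_ge_zero order_less_imp_le order_trans)
    also have "\<dots> = \<eta> * t * (norm d / (norm d + 1))" using nd by (simp add: field_simps)
    also have "\<dots> \<le> \<eta> * t"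
    proof -
      have "norm d / (norm d + 1) \<le> 1" using nd by (simp add: divide_le_eq_1)
      moreover have "\<eta> * t \<ge> 0" using \<eta> t by simp
      ultimately show ?thesis using mult_left_le by blast
    qed
    finally have close: "norm (y - x - t *\<^sub>R d) \<le> \<eta> * t" .
    have \<Psi>'d: "\<Psi>' d = Pr d" unfolding \<Psi>'_def using dN by simp
    have Hx: "H x = 0" unfolding H_def using hx by simp
    have "H y + Pr y = Pr x + t *\<^sub>R Pr d" using y\<Psi> Hx \<Psi>'d by (simp add: \<Psi>_def)
    then have "H y = Pr (x + t *\<^sub>R d - y)"
      by (simp add: linear_diff[OF Pl] linear_add[OF Pl] linear_scale[OF Pl] algebra_simps)
    then have "\<forall>j<k. a j \<bullet> H y = 0" using Pa by simp
    then have "H y = 0" by (rule span_orth_zero) (simp add: H_def)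
    then have "\<forall>j<k. h j y = 0" using indep_coeffs[OF inj ind, of "\<lambda>j. h j y"] unfolding H_def by blast
    then show "\<exists>y. (\<forall>j<k. h j y = 0) \<and> norm (y - x - t *\<^sub>R d) \<le> \<eta> * t" using close by blast
  qed
qed

lemma strict_in_tc:
  fixes h g :: "nat \<Rightarrow> 'a::euclidean_space \<Rightarrow> real" and a b :: "nat \<Rightarrow> 'a"
  assumes hder: "\<And>j. j < k \<Longrightarrow> (h j has_derivative (\<lambda>v. a j \<bullet> v)) (at x)"
    and hcont: "\<And>j. j < k \<Longrightarrow> continuous_on UNIV (h j)"
    and gder: "\<And>i. i < m \<Longrightarrow> (g i has_derivative (\<lambda>v. b i \<bullet> v)) (at x)"
    and gcont: "\<And>i. i < m \<Longrightarrow> continuous_on UNIV (g i)"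
    and xF: "x \<in> feasible_set m g k h"
    and inj: "inj_on a {..<k}" and ind: "independent (a ` {..<k})"
    and dN: "\<And>j. j < k \<Longrightarrow> a j \<bullet> d = 0"
    and dA: "\<And>i. i < m \<Longrightarrow> g i x = 0 \<Longrightarrow> b i \<bullet> d < 0"
  shows "d \<in> tangent_cone (feasible_set m g k h) x"
  unfolding tc_char
proof (intro allI impI)
  fix e :: real assume e: "e > 0"
  have hx: "\<And>j. j < k \<Longrightarrow> h j x = 0" and gx: "\<And>i. i < m \<Longrightarrow> g i x \<le> 0"
    using xF by (auto simp: feasible_set_def)
  have evA: "\<forall>i\<in>{..<m}. eventually (\<lambda>\<eta>. g i x = 0 \<longrightarrow> b i \<bullet> d + (norm (b i) + norm d + 1) * \<eta> < 0) (at_right (0::real))"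
  proof
    fix i assume "i \<in> {..<m}"
    then have i: "i < m" by simp
    show "eventually (\<lambda>\<eta>. g i x = 0 \<longrightarrow> b i \<bullet> d + (norm (b i) + norm d + 1) * \<eta> < 0) (at_right (0::real))"
    proof (cases "g i x = 0")
      case True
      have "((\<lambda>\<eta>. b i \<bullet> d + (norm (b i) + norm d + 1) * \<eta>) \<longlongrightarrow> b i \<bullet> d + (norm (b i) + norm d + 1) * 0) (at_right (0::real))"
        by (intro tendsto_intros)
      then have "((\<lambda>\<eta>. b i \<bullet> d + (norm (b i) + norm d + 1) * \<eta>) \<longlongrightarrow> b i \<bullet> d) (at_right (0::real))" by simp
      from order_tendstoD(2)[OF this, of 0] dA[OF i True]
      show ?thesis by (auto elim: eventually_mono)
    next
      case False
      then show ?thesis by simp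
    qed
  qed
  have evA2: "eventually (\<lambda>\<eta>. \<forall>i\<in>{..<m}. g i x = 0 \<longrightarrow> b i \<bullet> d + (norm (b i) + norm d + 1) * \<eta> < 0) (at_right (0::real))"
    by (rule eventually_ball_finite[OF finite_lessThan evA])
  have evB: "eventually (\<lambda>\<eta>::real. \<eta> < min e 1) (at_right 0)"
  proof -
    have "((\<lambda>\<eta>::real. \<eta>) \<longlongrightarrow> 0) (at_right 0)" by (rule tendsto_ident_at)
    from order_tendstoD(2)[OF this, of "min e 1"] e show ?thesis by simp
  qed
  have "eventually (\<lambda>\<eta>. (\<forall>i\<in>{..<m}. g i x = 0 \<longrightarrow> b i \<bullet> d + (norm (b i) + norm d + 1) * \<eta> < 0) \<and> \<eta> < min e 1) (at_right (0::real))"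
    using evA2 evB by (rule eventually_conj)
  then obtain bb where bb: "bb > 0" and bbP: "\<And>\<eta>. \<eta> > 0 \<Longrightarrow> \<eta> < bb \<Longrightarrow> (\<forall>i\<in>{..<m}. g i x = 0 \<longrightarrow> b i \<bullet> d + (norm (b i) + norm d + 1) * \<eta> < 0) \<and> \<eta> < min e 1"
    unfolding eventually_at_right_field by blast
  define \<eta> where "\<eta> = bb / 2"
  have \<eta>: "\<eta> > 0" "\<eta> < bb" using bb by (simp_all add: \<eta>_def)
  have \<eta>A: "\<And>i. i < m \<Longrightarrow> g i x = 0 \<Longrightarrow> b i \<bullet> d + (norm (b i) + norm d + 1) * \<eta> < 0"
    and \<eta>e: "\<eta> < e" and \<eta>1: "\<eta> < 1" using bbP[OF \<eta>] by auto
  have evN: "\<forall>i\<in>{..<m}. eventually (\<lambda>y. (g i x = 0 \<longrightarrow> g i y \<le> b i \<bullet> (y - x) + \<eta> * norm (y - x)) \<and> (g i x \<noteq> 0 \<longrightarrow> g i y < 0)) (nhds x)"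
  proof
    fix i assume "i \<in> {..<m}"
    then have i: "i < m" by simp
    show "eventually (\<lambda>y. (g i x = 0 \<longrightarrow> g i y \<le> b i \<bullet> (y - x) + \<eta> * norm (y - x)) \<and> (g i x \<noteq> 0 \<longrightarrow> g i y < 0)) (nhds x)"
    proof (cases "g i x = 0")
      case True
      obtain r where r: "r > 0" and rr: "\<And>y. norm (y - x) < r \<Longrightarrow> norm (g i y - g i x - b i \<bullet> (y - x)) \<le> \<eta> * norm (y - x)"
        using gder[OF i] \<eta>(1) unfolding has_derivative_at_alt by blast
      have "\<forall>y. dist y x < r \<longrightarrow> g i y \<le> b i \<bullet> (y - x) + \<eta> * norm (y - x)"
      proof (intro allI impI)
        fix y assume "dist y x < r"
        then have "norm (y - x) < r" by (simp add: dist_norm)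
        from rr[OF this] True show "g i y \<le> b i \<bullet> (y - x) + \<eta> * norm (y - x)" by simp
      qed
      then have "eventually (\<lambda>y. g i y \<le> b i \<bullet> (y - x) + \<eta> * norm (y - x)) (nhds x)"
        unfolding eventually_nhds_metric using r by blast
      then show ?thesis using True by simp
    next
      case False
      then have neg: "g i x < 0" using gx[OF i] by simp
      have "isCont (g i) x" using gcont[OF i] continuous_on_eq_continuous_at open_UNIV by blast
      then have "(g i \<longlongrightarrow> g i x) (nhds x)" unfolding isCont_def tendsto_at_iff_tendsto_nhds .
      from order_tendstoD(2)[OF this neg] show ?thesis using False by simp
    qed
  qed
  have "eventually (\<lambda>y. \<forall>i\<in>{..<m}. (g i x = 0 \<longrightarrow> g i y \<le> b i \<bullet> (y - x) + \<eta> * norm (y - x)) \<and> (g i x \<noteq> 0 \<longrightarrow> g i y < 0)) (nhds x)"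
    by (rule eventually_ball_finite[OF finite_lessThan evN])
  then obtain r where r: "r > 0" and rN: "\<And>y. dist y x < r \<Longrightarrow> \<forall>i\<in>{..<m}. (g i x = 0 \<longrightarrow> g i y \<le> b i \<bullet> (y - x) + \<eta> * norm (y - x)) \<and> (g i x \<noteq> 0 \<longrightarrow> g i y < 0)"
    unfolding eventually_nhds_metric by blast
  obtain \<delta> where \<delta>: "\<delta> > 0" and \<delta>P: "\<forall>t. 0 < t \<and> t < \<delta> \<longrightarrow> (\<exists>y. (\<forall>j<k. h j y = 0) \<and> norm (y - x - t *\<^sub>R d) \<le> \<eta> * t)"
    using eq_curve[OF hder hcont hx inj ind dN \<eta>(1)] by blast
  have nd: "norm d + 1 > 0" by (smt (verit) norm_ge_zero)
  define s where "s = min e r"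
  have s: "s > 0" "s \<le> e" "s \<le> r" using e r by (simp_all add: s_def)
  define t where "t = min \<delta> (s / (norm d + 1)) / 2"
  have t0: "t > 0" using \<delta> s nd by (simp add: t_def)
  have t\<delta>: "t < \<delta>" using \<delta> t0 by (simp add: t_def)
  have ts: "t * (norm d + 1) < s"
  proof -
    have "t \<le> s / (norm d + 1) / 2" unfolding t_def by (rule divide_right_mono[OF min.cobounded2]) simp
    then have "t * (norm d + 1) \<le> s / 2" using nd by (simp add: field_simps)
    then show ?thesis using s by simp
  qed
  have te: "t < e"
  proof -
    have "t \<le> t * (norm d + 1)" using t0 by (simp add: mult_le_cancel_left1)
    then show ?thesis using ts s by simp
  qed
  obtain y where yh: "\<forall>j<k. h j y = 0" and yc: "norm (y - x - t *\<^sub>R d) \<le> \<eta> * t"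
    using \<delta>P t0 t\<delta> by blast
  have nyx: "norm (y - x) \<le> t * (norm d + 1)"
  proof -
    have "norm (y - x) \<le> norm (t *\<^sub>R d) + norm (y - x - t *\<^sub>R d)"
      by (metis add.commute diff_add_cancel norm_triangle_ineq)
    also have "\<dots> \<le> t * norm d + \<eta> * t" using yc t0 by simp
    also have "\<dots> \<le> t * (norm d + 1)" using \<eta>1 t0 by (simp add: algebra_simps)
    finally show ?thesis .
  qed
  have yxs: "norm (y - x) < s" using nyx ts by simp
  have yN: "\<forall>i\<in>{..<m}. (g i x = 0 \<longrightarrow> g i y \<le> b i \<bullet> (y - x) + \<eta> * norm (y - x)) \<and> (g i x \<noteq> 0 \<longrightarrow> g i y < 0)"
    using rN[of y] yxs s by (simp add: dist_norm)
  have gy: "g i y \<le> 0" if i: "i < m" for i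
  proof (cases "g i x = 0")
    case False
    then show ?thesis using yN i by force
  next
    case True
    then have "g i y \<le> b i \<bullet> (y - x) + \<eta> * norm (y - x)" using yN i by blast
    also have "b i \<bullet> (y - x) = t * (b i \<bullet> d) + b i \<bullet> (y - x - t *\<^sub>R d)"
      by (simp add: inner_diff_right)
    also have "b i \<bullet> (y - x - t *\<^sub>R d) \<le> norm (b i) * (\<eta> * t)"
      by (metis Cauchy_Schwarz_ineq2 abs_le_iff mult_left_mono norm_ge_zero order_trans yc)
    also have "\<eta> * norm (y - x) \<le> \<eta> * (t * (norm d + 1))" using nyx \<eta>(1) by (simp add: mult_left_mono)
    finally have "g i y \<le> t * (b i \<bullet> d + (norm (b i) + norm d + 1) * \<eta>)" by (simp add: algebra_simps)
    also have "\<dots> \<le> 0" using \<eta>A[OF i True] t0 by (simp add: mult_pos_neg order_less_imp_le)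
    finally show ?thesis .
  qed
  have yF: "y \<in> feasible_set m g k h" using yh gy by (simp add: feasible_set_def)
  have "norm ((1/t) *\<^sub>R (y - x) - d) = norm ((1/t) *\<^sub>R (y - x - t *\<^sub>R d))"
    using t0 by (simp add: scaleR_diff_right)
  also have "\<dots> = norm (y - x - t *\<^sub>R d) / t" using t0 by simp
  also have "\<dots> \<le> \<eta>" using yc t0 by (simp add: divide_le_eq mult.commute)
  finally have "norm ((1/t) *\<^sub>R (y - x) - d) < e" using \<eta>e by simp
  then show "\<exists>t y. 0 < t \<and> t < e \<and> y \<in> feasible_set m g k h \<and> norm (y - x) < e \<and> norm ((1/t) *\<^sub>R (y - x) - d) < e"
    using t0 te yF yxs s by (intro exI[of _ t] exI[of _ y]) auto
qed

lemma the_min_closest: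
  fixes S :: "'a::euclidean_space set"
  assumes cl: "closed S" and cv: "convex S" and ne: "S \<noteq> {}"
  shows "(THE \<xi>. \<xi> \<in> S \<and> (\<forall>\<eta>\<in>S. (1/2) * (norm (\<xi> + c))\<^sup>2 \<le> (1/2) * (norm (\<eta> + c))\<^sup>2)) = closest_point S (- c)"
proof (rule the_equality)
  have dn: "dist (- c) y = norm (y + c)" for y
    by (metis add.commute dist_norm minus_diff_eq norm_minus_cancel diff_minus_eq_add)
  show "closest_point S (- c) \<in> S \<and> (\<forall>\<eta>\<in>S. (1/2) * (norm (closest_point S (- c) + c))\<^sup>2 \<le> (1/2) * (norm (\<eta> + c))\<^sup>2)"
  proof
    show "closest_point S (- c) \<in> S" by (rule closest_point_in_set[OF cl ne])
    show "\<forall>\<eta>\<in>S. (1/2) * (norm (closest_point S (- c) + c))\<^sup>2 \<le> (1/2) * (norm (\<eta> + c))\<^sup>2"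
    proof
      fix \<eta> assume "\<eta> \<in> S"
      then have "dist (- c) (closest_point S (- c)) \<le> dist (- c) \<eta>" using closest_point_exists(2)[OF cl ne] by blast
      then have "norm (closest_point S (- c) + c) \<le> norm (\<eta> + c)" by (simp only: dn)
      then show "(1/2) * (norm (closest_point S (- c) + c))\<^sup>2 \<le> (1/2) * (norm (\<eta> + c))\<^sup>2"
        by (simp add: power_mono)
    qed
  qed
  fix \<xi> assume H: "\<xi> \<in> S \<and> (\<forall>\<eta>\<in>S. (1/2) * (norm (\<xi> + c))\<^sup>2 \<le> (1/2) * (norm (\<eta> + c))\<^sup>2)"
  show "\<xi> = closest_point S (- c)"
  proof (rule closest_point_unique[OF cv cl])
    show "\<xi> \<in> S" using H by blast
    show "\<forall>z\<in>S. dist (- c) \<xi> \<le> dist (- c) z"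
    proof
      fix z assume "z \<in> S"
      then have "(norm (\<xi> + c))\<^sup>2 \<le> (norm (z + c))\<^sup>2" using H by auto
      then have "norm (\<xi> + c) \<le> norm (z + c)" by (rule power2_le_imp_le) simp
      then show "dist (- c) \<xi> \<le> dist (- c) z" by (simp only: dn)
    qed
  qed
qed

lemma C1_cont: "C1_fun f \<Longrightarrow> continuous_on UNIV f"
  unfolding C1_fun_def
  by (intro continuous_at_imp_continuous_on ballI differentiable_imp_continuous_within) blast

lemma C1_der: "C1_fun f \<Longrightarrow> (f has_derivative (\<lambda>v. grad f x \<bullet> v)) (at x)"
  unfolding C1_fun_def by (intro grad_deriv) blast

theorem mainTheorem5:
  fixes f :: "'a::euclidean_space \<Rightarrow> real"
    and g :: "nat \<Rightarrow> 'a \<Rightarrow> real" and h :: "nat \<Rightarrow> 'a \<Rightarrow> real"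
    and m k :: nat and x :: 'a
  assumes "C1_fun f" and "\<forall>i<m. C1_fun (g i)" and "\<forall>j<k. C1_fun (h j)"
    and "x \<in> feasible_set m g k h"
    and "MFCQ m g k h x"
  shows "(\<forall>\<alpha>>0. G_alpha f m g k h \<alpha> x \<in> tangent_cone (feasible_set m g k h) x) \<and>
         ((\<lambda>\<alpha>. G_alpha f m g k h \<alpha> x) \<longlongrightarrow>
            closest_point (tangent_cone (feasible_set m g k h) x) (- grad f x)) at_top"
proof -
  note C1g = assms(2) and C1h = assms(3) and xF = assms(4)
  define F where "F = feasible_set m g k h"
  define a where "a j = grad (h j) x" for j
  define b where "b i = grad (g i) x" for i
  define A where "A = active_set m g x"
  define L where "L = {v. (\<forall>j<k. a j \<bullet> v = 0) \<and> (\<forall>i\<in>A. b i \<bullet> v \<le> 0)}"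
  have hder: "\<And>j. j < k \<Longrightarrow> (h j has_derivative (\<lambda>v. a j \<bullet> v)) (at x)"
    unfolding a_def using C1h C1_der by blast
  have hcont: "\<And>j. j < k \<Longrightarrow> continuous_on UNIV (h j)" using C1h C1_cont by blast
  have gder: "\<And>i. i < m \<Longrightarrow> (g i has_derivative (\<lambda>v. b i \<bullet> v)) (at x)"
    unfolding b_def using C1g C1_der by blast
  have gcont: "\<And>i. i < m \<Longrightarrow> continuous_on UNIV (g i)" using C1g C1_cont by blast
  have hx: "\<And>j. j < k \<Longrightarrow> h j x = 0" and gx: "\<And>i. i < m \<Longrightarrow> g i x \<le> 0"
    using xF by (auto simp: feasible_set_def)
  have inj: "inj_on a {..<k}" and ind: "independent (a ` {..<k})"
    using assms(5) unfolding MFCQ_def a_def by auto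
  obtain \<xi> where \<xi>h: "\<And>j. j < k \<Longrightarrow> a j \<bullet> \<xi> = 0" and \<xi>g: "\<And>i. i \<in> A \<Longrightarrow> b i \<bullet> \<xi> < 0"
    using assms(5) unfolding MFCQ_def a_def b_def A_def by blast
  have A_iff: "i \<in> A \<longleftrightarrow> i < m \<and> g i x = 0" for i by (simp add: A_def active_set_def)
  have TL: "tangent_cone F x \<subseteq> L"
  proof
    fix d assume d: "d \<in> tangent_cone F x"
    have "a j \<bullet> d = 0" if j: "j < k" for j
    proof -
      have "\<forall>y\<in>F. h j y \<le> h j x" using j hx by (auto simp: F_def feasible_set_def)
      from tc_necessary[OF hder[OF j] this d] have 1: "a j \<bullet> d \<le> 0" .
      have "((\<lambda>y. - h j y) has_derivative (\<lambda>v. (- a j) \<bullet> v)) (at x)"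
        using has_derivative_minus[OF hder[OF j]] by simp
      moreover have "\<forall>y\<in>F. - h j y \<le> - h j x" using j hx by (auto simp: F_def feasible_set_def)
      ultimately have "(- a j) \<bullet> d \<le> 0" using tc_necessary d by blast
      with 1 show ?thesis by simp
    qed
    moreover have "b i \<bullet> d \<le> 0" if i: "i \<in> A" for i
    proof -
      have im: "i < m" and g0: "g i x = 0" using i A_iff by auto
      have "\<forall>y\<in>F. g i y \<le> g i x" using im g0 by (auto simp: F_def feasible_set_def)
      from tc_necessary[OF gder[OF im] this d] show ?thesis .
    qed
    ultimately show "d \<in> L" by (simp add: L_def)
  qed
  have LT: "L \<subseteq> tangent_cone F x"
  proof
    fix d assume d: "d \<in> L"
    show "d \<in> tangent_cone F x"
      unfolding tc_char
    proof (intro allI impI)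
      fix e :: real assume e: "e > 0"
      have n\<xi>: "norm \<xi> + 1 > 0" by (smt (verit) norm_ge_zero)
      define s where "s = e / (2 * (norm \<xi> + 1))"
      have s: "s > 0" using e n\<xi> by (simp add: s_def)
      have s\<xi>: "s * norm \<xi> < e / 2"
      proof -
        have "s * norm \<xi> \<le> s * (norm \<xi> + 1) - s" by (simp add: algebra_simps)
        also have "s * (norm \<xi> + 1) = e / 2" using n\<xi> unfolding s_def by (simp add: field_simps)
        finally show ?thesis using s by simp
      qed
      define d' where "d' = d + s *\<^sub>R \<xi>"
      have "d' \<in> tangent_cone F x"
        unfolding F_def
      proof (rule strict_in_tc[OF hder hcont gder gcont xF inj ind])
        fix j assume "j < k"
        then show "a j \<bullet> d' = 0" using d \<xi>h by (simp add: d'_def L_def inner_add_right)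
      next
        fix i assume "i < m" "g i x = 0"
        then have iA: "i \<in> A" using A_iff by simp
        then have "b i \<bullet> d \<le> 0" using d by (simp add: L_def)
        moreover have "s * (b i \<bullet> \<xi>) < 0" using \<xi>g[OF iA] s by (simp add: mult_pos_neg)
        ultimately show "b i \<bullet> d' < 0" by (simp add: d'_def inner_add_right)
      qed
      then have "\<forall>e>0. \<exists>t y. 0 < t \<and> t < e \<and> y \<in> F \<and> norm (y - x) < e \<and> norm ((1/t) *\<^sub>R (y - x) - d') < e"
        by (simp only: tc_char)
      moreover have "e / 2 > 0" using e by simp
      ultimately have "\<exists>t y. 0 < t \<and> t < e/2 \<and> y \<in> F \<and> norm (y - x) < e/2 \<and> norm ((1/t) *\<^sub>R (y - x) - d') < e/2"
        by blast
      then obtain t y where t: "0 < t" "t < e / 2" and yF: "y \<in> F" and yx: "norm (y - x) < e / 2"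
        and yd: "norm ((1/t) *\<^sub>R (y - x) - d') < e / 2" by blast
      have "norm ((1/t) *\<^sub>R (y - x) - d) \<le> norm ((1/t) *\<^sub>R (y - x) - d') + norm (s *\<^sub>R \<xi>)"
      proof -
        have "(1/t) *\<^sub>R (y - x) - d = ((1/t) *\<^sub>R (y - x) - d') + s *\<^sub>R \<xi>" by (simp add: d'_def)
        then show ?thesis by (metis norm_triangle_ineq)
      qed
      also have "\<dots> < e" using yd s\<xi> s by simp
      finally show "\<exists>t y. 0 < t \<and> t < e \<and> y \<in> F \<and> norm (y - x) < e \<and> norm ((1/t) *\<^sub>R (y - x) - d) < e"
        using t yF yx by (intro exI[of _ t] exI[of _ y]) auto
    qed
  qed
  have TeqL: "tangent_cone F x = L" using TL LT by blast
  have Lset: "L = (\<Inter>j\<in>{..<k}. {v. a j \<bullet> v = 0}) \<inter> (\<Inter>i\<in>A. {v. b i \<bullet> v \<le> 0})"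
    by (auto simp: L_def)
  have Lcl: "closed L" unfolding Lset
    by (intro closed_Int closed_INT ballI closed_hyperplane closed_halfspace_le)
  have Lcv: "convex L" unfolding Lset
    by (intro convex_Int convex_INT ballI convex_hyperplane convex_halfspace_le)
  have L0: "0 \<in> L" by (simp add: L_def)
  define P where "P \<alpha> = qp_feasible m g k h \<alpha> x" for \<alpha>
  have Pset: "P \<alpha> = (\<Inter>i\<in>{..<m}. {v. b i \<bullet> v \<le> - \<alpha> * g i x}) \<inter> (\<Inter>j\<in>{..<k}. {v. a j \<bullet> v = - \<alpha> * h j x})" for \<alpha>
    by (auto simp: P_def qp_feasible_def a_def b_def)
  have Pcl: "closed (P \<alpha>)" for \<alpha> unfolding Pset
    by (intro closed_Int closed_INT ballI closed_hyperplane closed_halfspace_le)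
  have Pcv: "convex (P \<alpha>)" for \<alpha> unfolding Pset
    by (intro convex_Int convex_INT ballI convex_hyperplane convex_halfspace_le)
  have P0: "0 \<in> P \<alpha>" if "\<alpha> > 0" for \<alpha>
    using that gx hx by (auto simp: P_def qp_feasible_def mult_nonneg_nonpos)
  have PL: "P \<alpha> \<subseteq> L" for \<alpha>
    using hx by (auto simp: P_def qp_feasible_def L_def a_def b_def A_iff)
  have Geq: "G_alpha f m g k h \<alpha> x = closest_point (P \<alpha>) (- grad f x)" if "\<alpha> > 0" for \<alpha>
    unfolding G_alpha_def P_def[symmetric]
    by (rule the_min_closest[OF Pcl Pcv]) (use P0[OF that] in blast)
  have part1: "\<forall>\<alpha>>0. G_alpha f m g k h \<alpha> x \<in> tangent_cone F x"
  proof (intro allI impI)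
    fix \<alpha> :: real assume \<alpha>: "\<alpha> > 0"
    have "closest_point (P \<alpha>) (- grad f x) \<in> P \<alpha>" using closest_point_in_set[OF Pcl] P0[OF \<alpha>] by blast
    then show "G_alpha f m g k h \<alpha> x \<in> tangent_cone F x" using Geq[OF \<alpha>] PL TeqL by auto
  qed
  define p where "p = closest_point L (- grad f x)"
  have pL: "p \<in> L" unfolding p_def using closest_point_in_set[OF Lcl] L0 by blast
  define \<alpha>0 where "\<alpha>0 = (\<Sum>i<m. \<bar>b i \<bullet> p\<bar> / \<bar>g i x\<bar>) + 1"
  have ev: "eventually (\<lambda>\<alpha>. G_alpha f m g k h \<alpha> x = p) at_top"
    unfolding eventually_at_top_linorder
  proof (intro exI[of _ \<alpha>0] allI impI)
    fix \<alpha> assume \<alpha>: "\<alpha> \<ge> \<alpha>0"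
    have \<alpha>0: "\<alpha>0 \<ge> 1" unfolding \<alpha>0_def by (simp add: sum_nonneg)
    then have \<alpha>p: "\<alpha> > 0" using \<alpha> by simp
    have pP: "p \<in> P \<alpha>"
    proof -
      have "b i \<bullet> p \<le> - \<alpha> * g i x" if i: "i < m" for i
      proof (cases "g i x = 0")
        case True
        then have "i \<in> A" using i A_iff by simp
        then show ?thesis using pL True by (simp add: L_def)
      next
        case False
        then have neg: "g i x < 0" using gx[OF i] by simp
        have "\<bar>b i \<bullet> p\<bar> / \<bar>g i x\<bar> \<le> (\<Sum>i<m. \<bar>b i \<bullet> p\<bar> / \<bar>g i x\<bar>)"
          by (rule member_le_sum) (use i in auto)
        also have "\<dots> \<le> \<alpha>" using \<alpha> by (simp add: \<alpha>0_def)
        finally have q: "\<bar>b i \<bullet> p\<bar> / \<bar>g i x\<bar> \<le> \<alpha>" .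
        have pos: "\<bar>g i x\<bar> > 0" using neg by simp
        have "\<bar>b i \<bullet> p\<bar> \<le> \<alpha> * \<bar>g i x\<bar>" using q pos by (metis pos_divide_le_eq mult.commute)
        then show ?thesis using neg by (simp add: abs_le_iff)
      qed
      moreover have "a j \<bullet> p = - \<alpha> * h j x" if "j < k" for j
        using pL hx[OF that] that by (simp add: L_def)
      ultimately show ?thesis by (simp add: P_def qp_feasible_def a_def b_def)
    qed
    have "p = closest_point (P \<alpha>) (- grad f x)"
    proof (rule closest_point_unique[OF Pcv Pcl pP])
      show "\<forall>z\<in>P \<alpha>. dist (- grad f x) p \<le> dist (- grad f x) z"
        using closest_point_exists(2)[OF Lcl, of "- grad f x"] L0 PL unfolding p_def by blast
    qed
    then show "G_alpha f m g k h \<alpha> x = p" using Geq[OF \<alpha>p] by simp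
  qed
  have part2: "((\<lambda>\<alpha>. G_alpha f m g k h \<alpha> x) \<longlongrightarrow> closest_point (tangent_cone F x) (- grad f x)) at_top"
    unfolding TeqL p_def[symmetric] by (rule tendsto_eventually[OF ev])
  show ?thesis using part1 part2 unfolding F_def by blast
qed

end
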